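(* Let $\mathcal{S} = (X, \xrightarrow{\Sigma}, \leq)$ be a very-WSTS and let $I_0$ be an ideal of $X$. Then the Ideal Karp-Miller algorithm, run on $\mathcal{S}$ from $I_0$, terminates.
   Context: A labeled transition system $\mathcal{S} = (X, \xrightarrow{\Sigma}, \leq)$ consists of a set $X$ of states, a finite alphabet $\Sigma$, a relation $\xrightarrow{a} \subseteq X \times X$ for each $a \in \Sigma$, and a quasi-ordering $\leq$ on $X$. It is a WSTS if $\leq$ is a well-quasi-ordering and it is monotone (if $x \xrightarrow{a} y$ and $x' \geq x$ then $x' \xrightarrow{*} y'$ for some $y' \geq y$). It has strong monotonicity if $x \xrightarrow{a} y$ and $x' \geq x$ imply $x' \xrightarrow{a} y'$ for some $y' \geq y$; it has strong-strict monotonicity if moreover $x \xrightarrow{a} y$ and $x' > x$ imply $x' \xrightarrow{a} y'$ for some $y' > y$. It is deterministic if each state has at most one $a$-successor for each $a \in \Sigma$. An ideal of $X$ is a nonempty downwards-closed directed subset of $X$; $\mathrm{Idl}(X)$ denotes the set of ideals. For a downwards-closed $D \subseteq X$, its ideal decomposition is the (finite) set of maximal ideals contained in $D$. The completion of $\mathcal{S}$ is the transition system $(\mathrm{Idl}(X), \xrightarrow{\Sigma}_{c}, \subseteq)$ where $I \xrightarrow{a}_{c} J$ iff $J$ belongs to the ideal decomposition of the downward closure of the set of $a$-successors of elements of $I$; it is finitely branching. When the completion is deterministic, $w(I)$ denotes the unique $w$-successor of $I$ in the completion, if defined. An acceleration candidate is a sequence $I_0 \subset I_1 \subset \cdots$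 of ideals. Levels: level $0$ of $\mathrm{Idl}(X)$ is $\mathrm{Idl}(X)$, and level $n>0$ is the set of unions $\bigcup_i I_i$ of acceleration candidates $I_0 \subset I_1 \subset \cdots$ of elements of level $n-1$. $\mathrm{Idl}(X)$ has finitely many levels if some level is empty. A very-WSTS is a WSTS $\mathcal{S}$ with strong monotonicity whose completion is a deterministic WSTS (in particular $\mathrm{Idl}(X)$ is well-quasi-ordered by $\subseteq$) with strong-strict monotonicity, and such that $\mathrm{Idl}(X)$ has finitely many levels. For $w \in \Sigma^+$ and an ideal $I$, the acceleration $w^\infty(I)$ is $\bigcup_{k \in \mathbb{N}} w^k(I)$ if $I \subset w(I)$, and $I$ otherwise. The Ideal Karp-Miller algorithm builds a tree whose nodes are labeled by pairs $\langle I, n\rangle$ (an ideal and a number of accelerations): it starts with a root labeled $\langle I_0, 0\rangle$; while there is an unmarked node $c : \langle I, n\rangle$, if $c$ has an ancestor labeled $\langle I', n'\rangle$ with $I' = I$ it marks $c$; otherwise, if $c$ has an ancestor $c' : \langle I', n'\rangle$ with $I' \subset I$ and $n' = n$, it replaces the label of $c$ by $\langle w^\infty(I), n+1\rangle$ where $w$ is the sequence of labels on the path from $c'$ to $c$; then, for every $a \in \Sigma$ such that $a(I)$ is defined (with $I$ the current ideal of $c$), it adds an $a$-labeled child of $c$ labeled $\langle a(I), n\rangle$ (with $n$ the current counter of $c$), and marks $c$. It returns the tree. *)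

theory Defs
  imports Main
begin

(* A labelled transition system is given by  step :: 'a => 's => 's => bool
   (step a x y  means  x -a-> y), the alphabet being the (finite) type 'a,
   together with a quasi-ordering le on a carrier set S of states. *)

definition qo_on :: "'s set \<Rightarrow> ('s \<Rightarrow> 's \<Rightarrow> bool) \<Rightarrow> bool" where
  "qo_on S le \<longleftrightarrow> (\<forall>x\<in>S. le x x) \<and> (\<forall>x\<in>S. \<forall>y\<in>S. \<forall>z\<in>S. le x y \<longrightarrow> le y z \<longrightarrow> le x z)"

definition wqo_on :: "'s set \<Rightarrow> ('s \<Rightarrow> 's \<Rightarrow> bool) \<Rightarrow> bool" where
  "wqo_on S le \<longleftrightarrow> qo_on S le \<and>
     (\<forall>f::nat \<Rightarrow> 's. (\<forall>i. f i \<in> S) \<longrightarrow> (\<exists>i j. i < j \<and> le (f i) (f j)))"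

definition any_step :: "('a \<Rightarrow> 's \<Rightarrow> 's \<Rightarrow> bool) \<Rightarrow> 's \<Rightarrow> 's \<Rightarrow> bool" where
  "any_step step x y \<longleftrightarrow> (\<exists>a. step a x y)"

definition lts_monotone :: "'s set \<Rightarrow> ('a \<Rightarrow> 's \<Rightarrow> 's \<Rightarrow> bool) \<Rightarrow> ('s \<Rightarrow> 's \<Rightarrow> bool) \<Rightarrow> bool" where
  "lts_monotone S step le \<longleftrightarrow>
     (\<forall>a. \<forall>x\<in>S. \<forall>y\<in>S. \<forall>x'\<in>S. step a x y \<and> le x x' \<longrightarrow>
        (\<exists>y'\<in>S. (any_step step)\<^sup>*\<^sup>* x' y' \<and> le y y'))"

definition lts_strong_monotone :: "'s set \<Rightarrow> ('a \<Rightarrow> 's \<Rightarrow> 's \<Rightarrow> bool) \<Rightarrow> ('s \<Rightarrow> 's \<Rightarrow> bool) \<Rightarrow> bool" where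
  "lts_strong_monotone S step le \<longleftrightarrow>
     (\<forall>a. \<forall>x\<in>S. \<forall>y\<in>S. \<forall>x'\<in>S. step a x y \<and> le x x' \<longrightarrow>
        (\<exists>y'\<in>S. step a x' y' \<and> le y y'))"

definition lts_strong_strict_monotone :: "'s set \<Rightarrow> ('a \<Rightarrow> 's \<Rightarrow> 's \<Rightarrow> bool) \<Rightarrow> ('s \<Rightarrow> 's \<Rightarrow> bool) \<Rightarrow> bool" where
  "lts_strong_strict_monotone S step le \<longleftrightarrow> lts_strong_monotone S step le \<and>
     (\<forall>a. \<forall>x\<in>S. \<forall>y\<in>S. \<forall>x'\<in>S. step a x y \<and> le x x' \<and> \<not> le x' x \<longrightarrow>
        (\<exists>y'\<in>S. step a x' y' \<and> le y y' \<and> \<not> le y' y))"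

definition is_wsts :: "'s set \<Rightarrow> ('a \<Rightarrow> 's \<Rightarrow> 's \<Rightarrow> bool) \<Rightarrow> ('s \<Rightarrow> 's \<Rightarrow> bool) \<Rightarrow> bool" where
  "is_wsts S step le \<longleftrightarrow> wqo_on S le \<and> lts_monotone S step le"

definition lts_deterministic :: "'s set \<Rightarrow> ('a \<Rightarrow> 's \<Rightarrow> 's \<Rightarrow> bool) \<Rightarrow> bool" where
  "lts_deterministic S step \<longleftrightarrow> (\<forall>a. \<forall>x\<in>S. \<forall>y z. step a x y \<longrightarrow> step a x z \<longrightarrow> y = z)"

definition down_closed :: "('x \<Rightarrow> 'x \<Rightarrow> bool) \<Rightarrow> 'x set \<Rightarrow> bool" where
  "down_closed le D \<longleftrightarrow> (\<forall>x\<in>D. \<forall>y. le y x \<longrightarrow> y \<in> D)"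

definition is_ideal :: "('x \<Rightarrow> 'x \<Rightarrow> bool) \<Rightarrow> 'x set \<Rightarrow> bool" where
  "is_ideal le I \<longleftrightarrow> I \<noteq> {} \<and> down_closed le I \<and> (\<forall>x\<in>I. \<forall>y\<in>I. \<exists>z\<in>I. le x z \<and> le y z)"

definition Idl :: "('x \<Rightarrow> 'x \<Rightarrow> bool) \<Rightarrow> 'x set set" where
  "Idl le = {I. is_ideal le I}"

definition down_closure :: "('x \<Rightarrow> 'x \<Rightarrow> bool) \<Rightarrow> 'x set \<Rightarrow> 'x set" where
  "down_closure le D = {y. \<exists>x\<in>D. le y x}"

definition ideal_decomp :: "('x \<Rightarrow> 'x \<Rightarrow> bool) \<Rightarrow> 'x set \<Rightarrow> 'x set set" where
  "ideal_decomp le D = {I. is_ideal le I \<and> I \<subseteq> D \<and>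
      (\<forall>J. is_ideal le J \<and> I \<subseteq> J \<and> J \<subseteq> D \<longrightarrow> J = I)}"

definition post :: "('a \<Rightarrow> 'x \<Rightarrow> 'x \<Rightarrow> bool) \<Rightarrow> 'a \<Rightarrow> 'x set \<Rightarrow> 'x set" where
  "post step a I = {y. \<exists>x\<in>I. step a x y}"

definition cstep :: "('a \<Rightarrow> 'x \<Rightarrow> 'x \<Rightarrow> bool) \<Rightarrow> ('x \<Rightarrow> 'x \<Rightarrow> bool) \<Rightarrow> 'a \<Rightarrow> 'x set \<Rightarrow> 'x set \<Rightarrow> bool" where
  "cstep step le a I J \<longleftrightarrow> J \<in> ideal_decomp le (down_closure le (post step a I))"

fun level :: "('x \<Rightarrow> 'x \<Rightarrow> bool) \<Rightarrow> nat \<Rightarrow> 'x set set" where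
  "level le 0 = Idl le"
| "level le (Suc n) = {\<Union>(range J) | J. (\<forall>i. J i \<in> level le n) \<and> (\<forall>i. J i \<subset> J (Suc i))}"

definition very_wsts :: "('a \<Rightarrow> 'x \<Rightarrow> 'x \<Rightarrow> bool) \<Rightarrow> ('x \<Rightarrow> 'x \<Rightarrow> bool) \<Rightarrow> bool" where
  "very_wsts step le \<longleftrightarrow>
     finite (UNIV :: 'a set) \<and>
     is_wsts UNIV step le \<and> lts_strong_monotone UNIV step le \<and>
     is_wsts (Idl le) (cstep step le) (\<subseteq>) \<and>
     lts_deterministic (Idl le) (cstep step le) \<and>
     lts_strong_strict_monotone (Idl le) (cstep step le) (\<subseteq>) \<and>
     (\<exists>n. level le n = {})"

definition csucc :: "('a \<Rightarrow> 'x \<Rightarrow> 'x \<Rightarrow> bool) \<Rightarrow> ('x \<Rightarrow> 'x \<Rightarrow> bool) \<Rightarrow> 'a \<Rightarrow> 'x set \<Rightarrow> 'x set option" where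
  "csucc step le a I = (if \<exists>J. cstep step le a I J then Some (THE J. cstep step le a I J) else None)"

fun wsucc :: "('a \<Rightarrow> 'x \<Rightarrow> 'x \<Rightarrow> bool) \<Rightarrow> ('x \<Rightarrow> 'x \<Rightarrow> bool) \<Rightarrow> 'a list \<Rightarrow> 'x set \<Rightarrow> 'x set option" where
  "wsucc step le [] I = Some I"
| "wsucc step le (a # w) I = Option.bind (csucc step le a I) (wsucc step le w)"

fun wpow :: "('a \<Rightarrow> 'x \<Rightarrow> 'x \<Rightarrow> bool) \<Rightarrow> ('x \<Rightarrow> 'x \<Rightarrow> bool) \<Rightarrow> 'a list \<Rightarrow> nat \<Rightarrow> 'x set \<Rightarrow> 'x set option" where
  "wpow step le w 0 I = Some I"
| "wpow step le w (Suc k) I = Option.bind (wpow step le w k I) (wsucc step le w)"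

definition accel :: "('a \<Rightarrow> 'x \<Rightarrow> 'x \<Rightarrow> bool) \<Rightarrow> ('x \<Rightarrow> 'x \<Rightarrow> bool) \<Rightarrow> 'a list \<Rightarrow> 'x set \<Rightarrow> 'x set" where
  "accel step le w I = (if \<exists>J. wsucc step le w I = Some J \<and> I \<subset> J
      then \<Union>{J. \<exists>k. wpow step le w k I = Some J} else I)"

(* Tree nodes are identified with their path from
   the root (a word over the alphabet); a state of the algorithm is
   (set of nodes, labelling by <ideal, number of accelerations>, set of marked nodes). *)

type_synonym ('a, 'x) ikm_state = "'a list set \<times> ('a list \<Rightarrow> 'x set \<times> nat) \<times> 'a list set"

definition proper_ancestor :: "'a list \<Rightarrow> 'a list \<Rightarrow> bool" where
  "proper_ancestor c' c \<longleftrightarrow> (\<exists>w. w \<noteq> [] \<and> c = c' @ w)"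

definition ikm_init :: "'x set \<Rightarrow> ('a, 'x) ikm_state" where
  "ikm_init I0 = ({[]}, (\<lambda>_. (I0, 0)), {})"

definition ikm_expand :: "('a \<Rightarrow> 'x \<Rightarrow> 'x \<Rightarrow> bool) \<Rightarrow> ('x \<Rightarrow> 'x \<Rightarrow> bool) \<Rightarrow> 'a list \<Rightarrow>
    'a list set \<Rightarrow> ('a list \<Rightarrow> 'x set \<times> nat) \<Rightarrow> 'a list set \<Rightarrow> ('a, 'x) ikm_state" where
  "ikm_expand step le c N lab M =
     (let ch = {c @ [a] | a. csucc step le a (fst (lab c)) \<noteq> None} in
      (N \<union> ch,
       (\<lambda>d. if d \<in> ch then (the (csucc step le (last d) (fst (lab c))), snd (lab c)) else lab d),
       M \<union> {c}))"

inductive ikm_step :: "('a \<Rightarrow> 'x \<Rightarrow> 'x \<Rightarrow> bool) \<Rightarrow> ('x \<Rightarrow> 'x \<Rightarrow> bool) \<Rightarrow>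
    ('a, 'x) ikm_state \<Rightarrow> ('a, 'x) ikm_state \<Rightarrow> bool" for step le where
  mark: "\<lbrakk> c \<in> N; c \<notin> M; proper_ancestor c' c; fst (lab c') = fst (lab c) \<rbrakk>
     \<Longrightarrow> ikm_step step le (N, lab, M) (N, lab, M \<union> {c})"
| accelerate: "\<lbrakk> c \<in> N; c \<notin> M;
       \<not> (\<exists>c''. proper_ancestor c'' c \<and> fst (lab c'') = fst (lab c));
       proper_ancestor c' c; fst (lab c') \<subset> fst (lab c); snd (lab c') = snd (lab c) \<rbrakk>
     \<Longrightarrow> ikm_step step le (N, lab, M)
           (ikm_expand step le c N
              (lab(c := (accel step le (drop (length c') c) (fst (lab c)), Suc (snd (lab c))))) M)"
| expand: "\<lbrakk> c \<in> N; c \<notin> M;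
       \<not> (\<exists>c''. proper_ancestor c'' c \<and> fst (lab c'') = fst (lab c));
       \<not> (\<exists>c'. proper_ancestor c' c \<and> fst (lab c') \<subset> fst (lab c) \<and> snd (lab c') = snd (lab c)) \<rbrakk>
     \<Longrightarrow> ikm_step step le (N, lab, M) (ikm_expand step le c N lab M)"

definition ikm_terminates :: "('a \<Rightarrow> 'x \<Rightarrow> 'x \<Rightarrow> bool) \<Rightarrow> ('x \<Rightarrow> 'x \<Rightarrow> bool) \<Rightarrow> 'x set \<Rightarrow> bool" where
  "ikm_terminates step le I0 \<longleftrightarrow>
     \<not> (\<exists>f :: nat \<Rightarrow> ('a, 'x) ikm_state. f 0 = ikm_init I0 \<and> (\<forall>i. ikm_step step le (f i) (f (Suc i))))"

end

theory Submission
  imports Defs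
begin

locale vwsts =
  fixes step :: "'a \<Rightarrow> 'x \<Rightarrow> 'x \<Rightarrow> bool" and le :: "'x \<Rightarrow> 'x \<Rightarrow> bool"
  assumes vw: "very_wsts step le"
begin

lemma vwD: "finite (UNIV :: 'a set)" "is_wsts UNIV step le" "lts_strong_monotone UNIV step le"
  "is_wsts (Idl le) (cstep step le) (\<subseteq>)" "lts_deterministic (Idl le) (cstep step le)"
  "lts_strong_strict_monotone (Idl le) (cstep step le) (\<subseteq>)" "\<exists>n. level le n = {}"
  using vw unfolding very_wsts_def by auto

lemma le_refl: "le x x"
  using vwD(2) unfolding is_wsts_def wqo_on_def qo_on_def by blast

lemma le_trans: "le x y \<Longrightarrow> le y z \<Longrightarrow> le x z"
  using vwD(2) unfolding is_wsts_def wqo_on_def qo_on_def by blast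

lemma fin_alpha: "finite (UNIV :: 'a set)"
  by (rule vwD(1))

lemma det: "I \<in> Idl le \<Longrightarrow> cstep step le a I y \<Longrightarrow> cstep step le a I z \<Longrightarrow> y = z"
  using vwD(5) unfolding lts_deterministic_def by blast

lemma cstep_Idl: "cstep step le a I J \<Longrightarrow> J \<in> Idl le"
  unfolding cstep_def ideal_decomp_def Idl_def by blast

lemma ssmono: "I \<in> Idl le \<Longrightarrow> I' \<in> Idl le \<Longrightarrow> cstep step le a I J \<Longrightarrow> I \<subseteq> I' \<Longrightarrow>
   \<exists>J'. cstep step le a I' J' \<and> J \<subseteq> J' \<and> (I \<subset> I' \<longrightarrow> J \<subset> J')"
proof -
  assume h: "I \<in> Idl le" "I' \<in> Idl le" "cstep step le a I J" "I \<subseteq> I'"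
  have J: "J \<in> Idl le" using h(3) by (rule cstep_Idl)
  have sm: "lts_strong_strict_monotone (Idl le) (cstep step le) (\<subseteq>)"
    by (rule vwD(6))
  have sm1: "lts_strong_monotone (Idl le) (cstep step le) (\<subseteq>)"
    using sm unfolding lts_strong_strict_monotone_def by blast
  have sm2: "\<forall>a. \<forall>x\<in>Idl le. \<forall>y\<in>Idl le. \<forall>x'\<in>Idl le. cstep step le a x y \<and> x \<subseteq> x' \<and> \<not> x' \<subseteq> x \<longrightarrow>
        (\<exists>y'\<in>Idl le. cstep step le a x' y' \<and> y \<subseteq> y' \<and> \<not> y' \<subseteq> y)"
    using sm unfolding lts_strong_strict_monotone_def by (rule conjunct2)
  note sm1 = sm1[unfolded lts_strong_monotone_def, rule_format]
  note sm2 = sm2[rule_format]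
  show ?thesis
  proof (cases "I \<subset> I'")
    case True
    then have "\<not> I' \<subseteq> I" by blast
    have "cstep step le a I J \<and> I \<subseteq> I' \<and> \<not> I' \<subseteq> I" using h(3) h(4) \<open>\<not> I' \<subseteq> I\<close> by simp
    from sm2[OF h(1) J h(2) this] obtain y' where "cstep step le a I' y'" "J \<subseteq> y'" "\<not> y' \<subseteq> J" by (elim bexE conjE)
    then show ?thesis using True by blast
  next
    case False
    have "cstep step le a I J \<and> I \<subseteq> I'" using h(3) h(4) by simp
    from sm1[OF h(1) J h(2) this] obtain y' where "cstep step le a I' y'" "J \<subseteq> y'" by (elim bexE conjE)
    then show ?thesis using False by blast
  qed
qed

lemma wqoI: "(\<And>i::nat. f i \<in> Idl le) \<Longrightarrow> \<exists>i j. i < j \<and> f i \<subseteq> f j"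
proof -
  assume f: "\<And>i. f i \<in> Idl le"
  have "\<forall>f::nat \<Rightarrow> 'x set. (\<forall>i. f i \<in> Idl le) \<longrightarrow> (\<exists>i j. i < j \<and> f i \<subseteq> f j)"
    using vwD(4) unfolding is_wsts_def wqo_on_def by blast
  then show ?thesis using f by blast
qed

lemma lev_empty: "\<exists>n. level le n = {}"
  by (rule vwD(7))

lemma down_single_ideal: "is_ideal le (down_closure le {x})"
  unfolding is_ideal_def down_closure_def down_closed_def
  using le_refl le_trans by blast

lemma zorn_ideal:
  assumes J0: "is_ideal le J0" and sub: "J0 \<subseteq> D"
  shows "\<exists>M. M \<in> ideal_decomp le D \<and> J0 \<subseteq> M"
proof -
  define A where "A = {J. is_ideal le J \<and> J0 \<subseteq> J \<and> J \<subseteq> D}"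
  have "\<forall>C\<in>chains A. \<exists>U\<in>A. \<forall>X\<in>C. X \<subseteq> U"
  proof
    fix C assume C: "C \<in> chains A"
    show "\<exists>U\<in>A. \<forall>X\<in>C. X \<subseteq> U"
    proof (cases "C = {}")
      case True
      have "J0 \<in> A" using J0 sub unfolding A_def by simp
      then show ?thesis using True by blast
    next
      case False
      have CA: "C \<subseteq> A" and ch: "\<forall>X\<in>C. \<forall>Y\<in>C. X \<subseteq> Y \<or> Y \<subseteq> X"
        using C unfolding chains_def chain_subset_def by auto
      have idC: "\<And>Z. Z \<in> C \<Longrightarrow> is_ideal le Z" and subC: "\<And>Z. Z \<in> C \<Longrightarrow> J0 \<subseteq> Z \<and> Z \<subseteq> D"
        using CA unfolding A_def by auto
      obtain Z0 where Z0: "Z0 \<in> C" using False by blast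
      have "is_ideal le (\<Union>C)"
        unfolding is_ideal_def
      proof (intro conjI)
        have "Z0 \<noteq> {}" using idC[OF Z0] unfolding is_ideal_def by simp
        then show "\<Union>C \<noteq> {}" using Z0 by blast
        show "down_closed le (\<Union>C)" unfolding down_closed_def
        proof (intro ballI allI impI)
          fix x y assume "x \<in> \<Union>C" "le y x"
          then obtain Z where Z: "Z \<in> C" "x \<in> Z" by blast
          have "down_closed le Z" using idC[OF Z(1)] unfolding is_ideal_def by simp
          then have "y \<in> Z" using Z(2) \<open>le y x\<close> unfolding down_closed_def by blast
          then show "y \<in> \<Union>C" using Z(1) by blast
        qed
        show "\<forall>x\<in>\<Union>C. \<forall>y\<in>\<Union>C. \<exists>z\<in>\<Union>C. le x z \<and> le y z"
        proof (intro ballI)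
          fix x y assume "x \<in> \<Union>C" "y \<in> \<Union>C"
          then obtain X Y where XY: "X \<in> C" "Y \<in> C" "x \<in> X" "y \<in> Y" by blast
          then have "X \<subseteq> Y \<or> Y \<subseteq> X" using ch by blast
          then obtain W where W: "W \<in> C" "x \<in> W" "y \<in> W" using XY by blast
          have "\<forall>x\<in>W. \<forall>y\<in>W. \<exists>z\<in>W. le x z \<and> le y z" using idC[OF W(1)] unfolding is_ideal_def by simp
          then obtain z where "z \<in> W" "le x z" "le y z" using W(2,3) by blast
          then show "\<exists>z\<in>\<Union>C. le x z \<and> le y z" using W(1) by blast
        qed
      qed
      moreover have "J0 \<subseteq> \<Union>C" "\<Union>C \<subseteq> D" using subC Z0 by blast+
      ultimately have "\<Union>C \<in> A" unfolding A_def by simp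
      then show ?thesis by blast
    qed
  qed
  from Zorn_Lemma2[OF this] obtain M where M: "M \<in> A" "\<forall>X\<in>A. M \<subseteq> X \<longrightarrow> X = M" by blast
  have M1: "is_ideal le M" "J0 \<subseteq> M" "M \<subseteq> D" using M(1) unfolding A_def by auto
  have "M \<in> ideal_decomp le D"
    unfolding ideal_decomp_def
  proof (intro CollectI conjI allI impI)
    fix J assume J: "is_ideal le J \<and> M \<subseteq> J \<and> J \<subseteq> D"
    then have "J \<in> A" using M1 unfolding A_def by auto
    then show "J = M" using M(2) J by blast
  qed (use M1 in auto)
  then show ?thesis using M1(2) by (intro exI[of _ M] conjI)
qed

lemma decomp_sub: "M \<in> ideal_decomp le D \<Longrightarrow> M \<subseteq> D"
  unfolding ideal_decomp_def by simp

lemma cstep_eq: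
  assumes I: "I \<in> Idl le" and c: "cstep step le a I J"
  shows "J = down_closure le (post step a I)"
proof
  show "J \<subseteq> down_closure le (post step a I)"
    using c unfolding cstep_def by (rule decomp_sub)
  show "down_closure le (post step a I) \<subseteq> J"
  proof
    fix x assume x: "x \<in> down_closure le (post step a I)"
    have "down_closure le {x} \<subseteq> down_closure le (post step a I)"
      using x le_trans unfolding down_closure_def by blast
    from zorn_ideal[OF down_single_ideal this] obtain M where
      M: "M \<in> ideal_decomp le (down_closure le (post step a I))" "down_closure le {x} \<subseteq> M" by blast
    have "cstep step le a I M" unfolding cstep_def by (rule M(1))
    then have "M = J" using det[OF I _ c] by blast
    moreover have "x \<in> down_closure le {x}" unfolding down_closure_def using le_refl by simp
    ultimately show "x \<in> J" using M(2) by blast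
  qed
qed

lemma cstep_ex:
  assumes "post step a I \<noteq> {}"
  shows "\<exists>J. cstep step le a I J"
proof -
  obtain x where x: "x \<in> post step a I" using assms by blast
  have "down_closure le {x} \<subseteq> down_closure le (post step a I)"
    using x le_trans unfolding down_closure_def by blast
  from zorn_ideal[OF down_single_ideal this] obtain M where
      M: "M \<in> ideal_decomp le (down_closure le (post step a I))" by blast
  have "cstep step le a I M" unfolding cstep_def by (rule M(1))
  then show ?thesis by blast
qed

lemma the_cstep: "I \<in> Idl le \<Longrightarrow> cstep step le a I J \<Longrightarrow> (THE J. cstep step le a I J) = J"
  by (rule the_equality) (auto dest: det)

lemma csucc_iff: "I \<in> Idl le \<Longrightarrow> csucc step le a I = Some J \<longleftrightarrow> cstep step le a I J"
proof
  assume I: "I \<in> Idl le" and c: "csucc step le a I = Some J"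
  then obtain J1 where J1: "cstep step le a I J1" unfolding csucc_def by (auto split: if_splits)
  then have "csucc step le a I = Some J1" unfolding csucc_def using the_cstep[OF I J1] by auto
  then show "cstep step le a I J" using c J1 by simp
next
  assume I: "I \<in> Idl le" and c: "cstep step le a I J"
  then show "csucc step le a I = Some J" unfolding csucc_def using the_cstep[OF I c] by auto
qed

end

context vwsts
begin

lemma chain_le: "(\<And>i. C i \<subset> C (Suc i)) \<Longrightarrow> i \<le> j \<Longrightarrow> C i \<subseteq> C j"
  by (rule lift_Suc_mono_le[of C]) auto

lemma level_ideal: "K \<in> level le n \<Longrightarrow> K \<in> Idl le"
proof (induction n arbitrary: K)
  case 0 then show ?case by simp
next
  case (Suc n)
  then obtain C where C: "K = \<Union>(range C)" "\<And>i. C i \<in> level le n" "\<And>i. C i \<subset> C (Suc i)" by auto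
  have id: "\<And>i. is_ideal le (C i)" using C(2) Suc.IH unfolding Idl_def by blast
  have "is_ideal le K"
    unfolding is_ideal_def
  proof (intro conjI)
    show "K \<noteq> {}" using id[of 0] C(1) unfolding is_ideal_def by blast
    show "down_closed le K" using id C(1) unfolding is_ideal_def down_closed_def by blast
    show "\<forall>x\<in>K. \<forall>y\<in>K. \<exists>z\<in>K. le x z \<and> le y z"
    proof (intro ballI)
      fix x y assume "x \<in> K" "y \<in> K"
      then obtain i j where ij: "x \<in> C i" "y \<in> C j" using C(1) by blast
      have "C i \<subseteq> C (max i j)" "C j \<subseteq> C (max i j)" using chain_le[of C, OF C(3)] by auto
      then have "x \<in> C (max i j)" "y \<in> C (max i j)" using ij by auto
      then obtain z where "z \<in> C (max i j)" "le x z" "le y z" using id[of "max i j"] unfolding is_ideal_def by blast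
      then show "\<exists>z\<in>K. le x z \<and> le y z" using C(1) by blast
    qed
  qed
  then show ?case unfolding Idl_def by simp
qed

lemma level_empty_mono: "level le n = {} \<Longrightarrow> n \<le> m \<Longrightarrow> level le m = {}"
proof (induction m)
  case 0 then show ?case by simp
next
  case (Suc m)
  show ?case
  proof (cases "n = Suc m")
    case True then show ?thesis using Suc by simp
  next
    case False
    then have "level le m = {}" using Suc by simp
    then show ?thesis by simp
  qed
qed

lemma level_cstep: "K \<in> level le n \<Longrightarrow> cstep step le a K K' \<Longrightarrow> K' \<in> level le n"
proof (induction n arbitrary: K K')
  case 0 then show ?case using cstep_Idl by simp
next
  case (Suc n)
  then obtain C where C: "K = \<Union>(range C)" "\<And>i. C i \<in> level le n" "\<And>i. C i \<subset> C (Suc i)" by auto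
  have KI: "K \<in> Idl le" using Suc.prems(1) by (rule level_ideal)
  have CI: "\<And>i. C i \<in> Idl le" using C(2) by (rule level_ideal)
  have K': "K' = down_closure le (post step a K)" using cstep_eq[OF KI Suc.prems(2)] .
  have "K' \<noteq> {}" using cstep_Idl[OF Suc.prems(2)] unfolding Idl_def is_ideal_def by blast
  then obtain x y where xy: "x \<in> K" "step a x y" unfolding K' down_closure_def post_def by blast
  then obtain i0 where i0: "x \<in> C i0" using C(1) by blast
  define C' where "C' i = down_closure le (post step a (C (i + i0)))" for i
  have ex: "cstep step le a (C (i + i0)) (C' i)" for i
  proof -
    have "x \<in> C (i + i0)" using i0 chain_le[of C, OF C(3), of i0 "i + i0"] by auto
    then have "post step a (C (i + i0)) \<noteq> {}" using xy unfolding post_def by blast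
    then obtain J where J: "cstep step le a (C (i + i0)) J" using cstep_ex by blast
    then show ?thesis using cstep_eq[OF CI J] unfolding C'_def by simp
  qed
  have lev: "C' i \<in> level le n" for i using Suc.IH[OF C(2) ex] .
  have strict: "C' i \<subset> C' (Suc i)" for i
  proof -
    obtain J' where J': "cstep step le a (C (Suc i + i0)) J'" "C' i \<subseteq> J'" "C (i + i0) \<subset> C (Suc i + i0) \<longrightarrow> C' i \<subset> J'"
      using ssmono[OF CI[of "i+i0"] CI[of "Suc i + i0"] ex[of i]] C(3)[of "i + i0"] by auto
    have "J' = C' (Suc i)" using det[OF CI J'(1) ex[of "Suc i"]] .
    then show ?thesis using J'(3) C(3)[of "i + i0"] by simp
  qed
  have eq: "K' = \<Union>(range C')"
  proof
    show "\<Union>(range C') \<subseteq> K'" unfolding K' C'_def down_closure_def post_def C(1) by blast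
    show "K' \<subseteq> \<Union>(range C')"
    proof
      fix z assume "z \<in> K'"
      then obtain u v where uv: "u \<in> K" "step a u v" "le z v" unfolding K' down_closure_def post_def by blast
      then obtain i where "u \<in> C i" using C(1) by blast
      then have "u \<in> C (i + i0)" using chain_le[of C, OF C(3), of i "i + i0"] by auto
      then have "z \<in> C' i" using uv unfolding C'_def down_closure_def post_def by blast
      then show "z \<in> \<Union>(range C')" by blast
    qed
  qed
  show ?case using eq lev strict by auto
qed

end

context vwsts
begin

lemma csucc_level: "K \<in> level le n \<Longrightarrow> csucc step le a K = Some K' \<Longrightarrow> K' \<in> level le n"
  using level_cstep csucc_iff level_ideal by blast

lemma wsucc_level: "K \<in> level le n \<Longrightarrow> wsucc step le w K = Some K' \<Longrightarrow> K' \<in> level le n"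
proof (induction w arbitrary: K)
  case Nil then show ?case by simp
next
  case (Cons a w)
  then obtain M where M: "csucc step le a K = Some M" "wsucc step le w M = Some K'"
    by (cases "csucc step le a K") auto
  show ?case using Cons.IH[OF csucc_level[OF Cons.prems(1) M(1)] M(2)] .
qed

lemma wsucc_Idl: "K \<in> Idl le \<Longrightarrow> wsucc step le w K = Some K' \<Longrightarrow> K' \<in> Idl le"
  using wsucc_level[of K 0] by simp

lemma wsucc_append: "wsucc step le (v @ [a]) K = Option.bind (wsucc step le v K) (csucc step le a)"
proof (induction v arbitrary: K)
  case Nil then show ?case by (cases "csucc step le a K") auto
next
  case (Cons b v)
  then show ?case by (cases "csucc step le b K") auto
qed

lemma wsucc_mono: "K \<in> Idl le \<Longrightarrow> K' \<in> Idl le \<Longrightarrow> K \<subseteq> K' \<Longrightarrow> wsucc step le w K = Some L \<Longrightarrow>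
  \<exists>L'. wsucc step le w K' = Some L' \<and> L \<subseteq> L' \<and> (K \<subset> K' \<longrightarrow> L \<subset> L')"
proof (induction w arbitrary: K K')
  case Nil then show ?case by simp
next
  case (Cons a w)
  then obtain M where M: "csucc step le a K = Some M" "wsucc step le w M = Some L"
    by (cases "csucc step le a K") auto
  have cM: "cstep step le a K M" using M(1) csucc_iff Cons.prems(1) by blast
  obtain M' where M': "cstep step le a K' M'" "M \<subseteq> M'" "K \<subset> K' \<longrightarrow> M \<subset> M'"
    using ssmono[OF Cons.prems(1,2) cM Cons.prems(3)] by blast
  have cM': "csucc step le a K' = Some M'" using M'(1) csucc_iff Cons.prems(2) by blast
  obtain L' where L': "wsucc step le w M' = Some L'" "L \<subseteq> L'" "M \<subset> M' \<longrightarrow> L \<subset> L'"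
    using Cons.IH[OF cstep_Idl[OF cM] cstep_Idl[OF M'(1)] M'(2) M(2)] by blast
  show ?case using cM' L' M'(3) by auto
qed

lemma accel_level:
  assumes K: "K \<in> level le n" and L: "wsucc step le w K = Some L" and KL: "K \<subset> L"
  shows "accel step le w K \<in> level le (Suc n)"
proof -
  have P: "\<exists>J J'. wpow step le w k K = Some J \<and> J \<in> level le n \<and> wsucc step le w J = Some J' \<and> J \<subset> J'" for k
  proof (induction k)
    case 0 then show ?case using K L KL by simp
  next
    case (Suc k)
    then obtain J J' where J: "wpow step le w k K = Some J" "J \<in> level le n" "wsucc step le w J = Some J'" "J \<subset> J'" by blast
    have J'l: "J' \<in> level le n" using wsucc_level[OF J(2) J(3)] .
    obtain J'' where "wsucc step le w J' = Some J''" "J' \<subseteq> J''" "J \<subset> J' \<longrightarrow> J' \<subset> J''"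
      using wsucc_mono[OF level_ideal[OF J(2)] level_ideal[OF J'l] _ J(3)] J(4) by blast
    then show ?case using J J'l by auto
  qed
  define F where "F k = the (wpow step le w k K)" for k
  have Fk: "wpow step le w k K = Some (F k)" for k using P[of k] unfolding F_def by auto
  have Fl: "F k \<in> level le n" for k using P[of k] Fk by auto
  have Fs: "F k \<subset> F (Suc k)" for k
  proof -
    obtain J' where "wsucc step le w (F k) = Some J'" "F k \<subset> J'" using P[of k] Fk by auto
    moreover have "wpow step le w (Suc k) K = Some J'" using Fk[of k] calculation by simp
    ultimately show ?thesis using Fk[of "Suc k"] by simp
  qed
  have eq: "\<Union>{J. \<exists>k. wpow step le w k K = Some J} = \<Union>(range F)"
    using Fk by auto
  have "accel step le w K = \<Union>{J. \<exists>k. wpow step le w k K = Some J}"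
    unfolding accel_def using L KL by auto
  then show ?thesis using eq Fl Fs by auto
qed

lemma level_bound: "\<exists>N. \<forall>n K. K \<in> level le n \<longrightarrow> n < N"
proof -
  obtain N where N: "level le N = {}" using lev_empty by blast
  have "K \<in> level le n \<Longrightarrow> n < N" for n K
    using level_empty_mono[OF N, of n] by (cases "N \<le> n") auto
  then show ?thesis by blast
qed

end

context vwsts
begin

definition good :: "('a list \<Rightarrow> 'x set \<times> nat) \<Rightarrow> 'a list \<Rightarrow> bool" where
  "good lab d \<longleftrightarrow> \<not> (\<exists>c'. proper_ancestor c' d \<and> fst (lab c') = fst (lab d)) \<and>
     \<not> (\<exists>c'. proper_ancestor c' d \<and> fst (lab c') \<subset> fst (lab d) \<and> snd (lab c') = snd (lab d))"

definition ikm_inv :: "'a list set \<Rightarrow> ('a list \<Rightarrow> 'x set \<times> nat) \<Rightarrow> 'a list set \<Rightarrow> bool" where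
  "ikm_inv N lab M \<longleftrightarrow>
   M \<subseteq> N \<and>
   (\<forall>d a. d @ [a] \<in> N \<longrightarrow> d \<in> M) \<and>
   (\<forall>d\<in>N. fst (lab d) \<in> level le (snd (lab d))) \<and>
   (\<forall>d a. d @ [a] \<in> N \<longrightarrow> (\<exists>K. csucc step le a (fst (lab d)) = Some K \<and>
        (lab (d @ [a]) = (K, snd (lab d)) \<or> (d @ [a] \<in> M \<and> snd (lab (d @ [a])) = Suc (snd (lab d)))))) \<and>
   (\<forall>d a. d @ [a] \<in> N \<longrightarrow> good lab d \<or> (\<exists>e b. d = e @ [b] \<and> snd (lab d) = Suc (snd (lab e))))"

lemma good_cong: "(\<And>x. x = d \<or> proper_ancestor x d \<Longrightarrow> f x = g x) \<Longrightarrow> good f d = good g d"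
  unfolding good_def by (metis (no_types, lifting))

lemma inv_anc:
  assumes inv: "ikm_inv N lab M"
  shows "x @ w \<in> N \<Longrightarrow> w \<noteq> [] \<Longrightarrow> x \<in> M"
proof (induction w rule: rev_induct)
  case Nil then show ?case by simp
next
  case (snoc a w)
  have P1: "\<forall>d a. d @ [a] \<in> N \<longrightarrow> d \<in> M" and MN: "M \<subseteq> N" using inv unfolding ikm_inv_def by blast+
  have "(x @ w) @ [a] \<in> N" using snoc.prems by simp
  then have xw: "x @ w \<in> M" using P1 by blast
  show ?case
  proof (cases "w = []")
    case True then show ?thesis using xw by simp
  next
    case False then show ?thesis using snoc.IH xw MN by blast
  qed
qed

lemma inv_pa: "ikm_inv N lab M \<Longrightarrow> proper_ancestor x d \<Longrightarrow> d \<in> N \<Longrightarrow> x \<in> M"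
  unfolding proper_ancestor_def using inv_anc by blast

lemma inv_path:
  assumes inv: "ikm_inv N lab M"
  shows "c' @ v \<in> N \<Longrightarrow> snd (lab c') \<le> snd (lab (c' @ v)) \<and>
    (snd (lab (c' @ v)) = snd (lab c') \<longrightarrow> wsucc step le v (fst (lab c')) = Some (fst (lab (c' @ v))))"
proof (induction v rule: rev_induct)
  case Nil then show ?case by simp
next
  case (snoc a v)
  have P1: "\<forall>d a. d @ [a] \<in> N \<longrightarrow> d \<in> M" and MN: "M \<subseteq> N"
    and P3: "\<forall>d a. d @ [a] \<in> N \<longrightarrow> (\<exists>K. csucc step le a (fst (lab d)) = Some K \<and>
        (lab (d @ [a]) = (K, snd (lab d)) \<or> (d @ [a] \<in> M \<and> snd (lab (d @ [a])) = Suc (snd (lab d)))))"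
    using inv unfolding ikm_inv_def by blast+
  have N1: "(c' @ v) @ [a] \<in> N" using snoc.prems by simp
  then have "c' @ v \<in> N" using P1 MN by blast
  note IH = snoc.IH[OF this]
  obtain K where K: "csucc step le a (fst (lab (c' @ v))) = Some K"
     "lab ((c' @ v) @ [a]) = (K, snd (lab (c' @ v))) \<or> snd (lab ((c' @ v) @ [a])) = Suc (snd (lab (c' @ v)))"
    using P3 N1 by blast
  have le1: "snd (lab (c' @ v)) \<le> snd (lab ((c' @ v) @ [a]))" using K(2) by auto
  show ?case
  proof (intro conjI impI)
    show "snd (lab c') \<le> snd (lab (c' @ v @ [a]))" using IH le1 by simp
    assume eq: "snd (lab (c' @ v @ [a])) = snd (lab c')"
    then have e1: "snd (lab (c' @ v)) = snd (lab c')" using IH le1 by simp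
    then have "lab ((c' @ v) @ [a]) = (K, snd (lab (c' @ v)))" using K(2) eq by auto
    moreover have "wsucc step le v (fst (lab c')) = Some (fst (lab (c' @ v)))" using IH e1 by simp
    ultimately show "wsucc step le (v @ [a]) (fst (lab c')) = Some (fst (lab (c' @ v @ [a])))"
      using K(1) by (simp add: wsucc_append)
  qed
qed

lemma init_inv: "I0 \<in> Idl le \<Longrightarrow> ikm_inv {[]} (\<lambda>_. (I0, 0)) {}"
  unfolding ikm_inv_def by simp

end

context vwsts
begin

lemma expand_inv:
  assumes inv: "ikm_inv N lab M" and cN: "c \<in> N" and cM: "c \<notin> M"
    and lx: "\<And>d. d \<noteq> c \<Longrightarrow> lx d = lab d"
    and i: "fst (lx c) \<in> level le (snd (lx c))"
    and ii: "\<And>e b. c = e @ [b] \<Longrightarrow> (\<exists>K. csucc step le b (fst (lab e)) = Some K \<and>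
               (lx c = (K, snd (lab e)) \<or> snd (lx c) = Suc (snd (lab e))))"
    and iii: "good lx c \<or> (\<exists>e b. c = e @ [b] \<and> snd (lx c) = Suc (snd (lab e)))"
    and ex: "ikm_expand step le c N lx M = (N', lab', M')"
  shows "ikm_inv N' lab' M' \<and> M' = insert c M \<and> (\<forall>d\<in>M. lab' d = lab d)"
proof -
  have MN: "M \<subseteq> N" and P1: "\<forall>d a. d @ [a] \<in> N \<longrightarrow> d \<in> M"
    and P2: "\<forall>d\<in>N. fst (lab d) \<in> level le (snd (lab d))"
    and P3: "\<forall>d a. d @ [a] \<in> N \<longrightarrow> (\<exists>K. csucc step le a (fst (lab d)) = Some K \<and>
        (lab (d @ [a]) = (K, snd (lab d)) \<or> (d @ [a] \<in> M \<and> snd (lab (d @ [a])) = Suc (snd (lab d)))))"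
    and P4: "\<forall>d a. d @ [a] \<in> N \<longrightarrow> good lab d \<or> (\<exists>e b. d = e @ [b] \<and> snd (lab d) = Suc (snd (lab e)))"
    using inv unfolding ikm_inv_def by blast+
  define ch where "ch = {c @ [a] | a. csucc step le a (fst (lx c)) \<noteq> None}"
  have N': "N' = N \<union> ch" and M': "M' = M \<union> {c}"
    and lab': "lab' = (\<lambda>d. if d \<in> ch then (the (csucc step le (last d) (fst (lx c))), snd (lx c)) else lx d)"
    using ex unfolding ikm_expand_def ch_def Let_def by auto
  have chN: "d \<in> ch \<Longrightarrow> d \<notin> N" for d using P1 cM unfolding ch_def by blast
  have chE: "d \<in> ch \<Longrightarrow> \<exists>a K. d = c @ [a] \<and> csucc step le a (fst (lx c)) = Some K \<and> lab' d = (K, snd (lx c))" for d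
    unfolding ch_def lab' by (auto simp: ch_def)
  have chI: "csucc step le a (fst (lx c)) = Some K \<Longrightarrow> c @ [a] \<in> ch \<and> lab' (c @ [a]) = (K, snd (lx c))" for a K
    unfolding lab' ch_def by auto
  have labN: "d \<in> N \<Longrightarrow> lab' d = lx d" for d using chN unfolding lab' by auto
  have labN2: "d \<in> N \<Longrightarrow> d \<noteq> c \<Longrightarrow> lab' d = lab d" for d using labN lx by simp
  have labM: "\<forall>d\<in>M. lab' d = lab d" using labN2 MN cM by blast
  have Q0: "M' \<subseteq> N'" using MN cN N' M' by blast
  have Q1: "\<forall>d a. d @ [a] \<in> N' \<longrightarrow> d \<in> M'"
  proof (intro allI impI)
    fix d a assume "d @ [a] \<in> N'"
    then show "d \<in> M'"
    proof (cases "d @ [a] \<in> N")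
      case True then show ?thesis using P1 M' by blast
    next
      case False
      then have "d @ [a] \<in> ch" using \<open>d @ [a] \<in> N'\<close> N' by blast
      then show ?thesis using chE M' by auto
    qed
  qed
  have Q2: "\<forall>d\<in>N'. fst (lab' d) \<in> level le (snd (lab' d))"
  proof
    fix d assume "d \<in> N'"
    show "fst (lab' d) \<in> level le (snd (lab' d))"
    proof (cases "d \<in> N")
      case True
      then show ?thesis
      proof (cases "d = c")
        case True then show ?thesis using labN cN i by simp
      next
        case False then show ?thesis using labN2 \<open>d \<in> N\<close> P2 by simp
      qed
    next
      case False
      then have "d \<in> ch" using \<open>d \<in> N'\<close> N' by blast
      then obtain a K where aK: "d = c @ [a]" "csucc step le a (fst (lx c)) = Some K" "lab' d = (K, snd (lx c))"
        using chE by blast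
      show ?thesis using csucc_level[OF i aK(2)] aK(3) by simp
    qed
  qed
  have Q3: "\<forall>d a. d @ [a] \<in> N' \<longrightarrow> (\<exists>K. csucc step le a (fst (lab' d)) = Some K \<and>
        (lab' (d @ [a]) = (K, snd (lab' d)) \<or> (d @ [a] \<in> M' \<and> snd (lab' (d @ [a])) = Suc (snd (lab' d)))))"
  proof (intro allI impI)
    fix d a assume da: "d @ [a] \<in> N'"
    show "\<exists>K. csucc step le a (fst (lab' d)) = Some K \<and>
        (lab' (d @ [a]) = (K, snd (lab' d)) \<or> (d @ [a] \<in> M' \<and> snd (lab' (d @ [a])) = Suc (snd (lab' d))))"
    proof (cases "d @ [a] \<in> N")
      case True
      then have dM: "d \<in> M" using P1 by blast
      then have ld: "lab' d = lab d" using labM by blast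
      show ?thesis
      proof (cases "d @ [a] = c")
        case True
        obtain K where K: "csucc step le a (fst (lab d)) = Some K"
          "lx c = (K, snd (lab d)) \<or> snd (lx c) = Suc (snd (lab d))" using ii[OF True[symmetric]] by blast
        have "lab' (d @ [a]) = lx c" using True labN cN by simp
        then show ?thesis using K ld M' True by auto
      next
        case False
        have "lab' (d @ [a]) = lab (d @ [a])" using labN2 True False by simp
        then show ?thesis using P3 True ld M' by fastforce
      qed
    next
      case False
      then have "d @ [a] \<in> ch" using da N' by blast
      then obtain a' K where aK: "d @ [a] = c @ [a']" "csucc step le a' (fst (lx c)) = Some K" "lab' (d @ [a]) = (K, snd (lx c))"
        using chE by blast
      then have "d = c" "a = a'" by auto
      moreover have "lab' c = lx c" using labN cN by simp
      ultimately show ?thesis using aK by auto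
    qed
  qed
  have Q4: "\<forall>d a. d @ [a] \<in> N' \<longrightarrow> good lab' d \<or> (\<exists>e b. d = e @ [b] \<and> snd (lab' d) = Suc (snd (lab' e)))"
  proof (intro allI impI)
    fix d a assume da: "d @ [a] \<in> N'"
    show "good lab' d \<or> (\<exists>e b. d = e @ [b] \<and> snd (lab' d) = Suc (snd (lab' e)))"
    proof (cases "d @ [a] \<in> N")
      case True
      then have dM: "d \<in> M" using P1 by blast
      have anc: "x = d \<or> proper_ancestor x d \<Longrightarrow> lab' x = lab x" for x
        using dM labM inv_pa[OF inv, of x d] MN by blast
      have g: "good lab' d = good lab d" by (rule good_cong) (rule anc)
      have "good lab d \<or> (\<exists>e b. d = e @ [b] \<and> snd (lab d) = Suc (snd (lab e)))" using P4 True by blast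
      moreover have "d = e @ [b] \<Longrightarrow> proper_ancestor e d" for e b unfolding proper_ancestor_def by simp
      ultimately show ?thesis using g anc by metis
    next
      case False
      then have "d @ [a] \<in> ch" using da N' by blast
      then have dc: "d = c" using chE by auto
      have anc: "x = c \<or> proper_ancestor x c \<Longrightarrow> lab' x = lx x" for x
        using labN cN inv_pa[OF inv, of x c] MN by blast
      have g: "good lab' c = good lx c" by (rule good_cong) (rule anc)
      have "c = e @ [b] \<Longrightarrow> lab' e = lab e" for e b
      proof -
        assume "c = e @ [b]"
        then have "proper_ancestor e c" unfolding proper_ancestor_def by simp
        then have "e \<in> M" using inv_pa[OF inv] cN by blast
        then show "lab' e = lab e" using labM by blast
      qed
      moreover have "lab' c = lx c" using labN cN by simp
      ultimately show ?thesis using iii g dc by metis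
    qed
  qed
  show ?thesis using Q0 Q1 Q2 Q3 Q4 M' labM unfolding ikm_inv_def by blast
qed

end

context vwsts
begin

lemma step_inv:
  assumes st: "ikm_step step le (N, lab, M) (N', lab', M')" and inv: "ikm_inv N lab M"
  shows "ikm_inv N' lab' M' \<and> (\<exists>c. c \<notin> M \<and> M' = insert c M) \<and> (\<forall>d\<in>M. lab' d = lab d)"
  using st
proof (cases rule: ikm_step.cases)
  case (mark c c')
  have "ikm_inv N lab (M \<union> {c})" using inv mark unfolding ikm_inv_def by blast
  then show ?thesis using mark by auto
next
  case (expand c)
  have P3: "\<forall>d a. d @ [a] \<in> N \<longrightarrow> (\<exists>K. csucc step le a (fst (lab d)) = Some K \<and>
        (lab (d @ [a]) = (K, snd (lab d)) \<or> (d @ [a] \<in> M \<and> snd (lab (d @ [a])) = Suc (snd (lab d)))))"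
    and P2: "\<forall>d\<in>N. fst (lab d) \<in> level le (snd (lab d))"
    using inv unfolding ikm_inv_def by blast+
  have ii: "\<exists>K. csucc step le b (fst (lab e)) = Some K \<and>
               (lab c = (K, snd (lab e)) \<or> snd (lab c) = Suc (snd (lab e)))" if "c = e @ [b]" for e b
    using P3 that expand by blast
  have "good lab c" unfolding good_def using expand by blast
  have r: "ikm_inv N' lab' M' \<and> M' = insert c M \<and> (\<forall>d\<in>M. lab' d = lab d)"
  proof (rule expand_inv[where lx=lab and N'=N' and lab'=lab' and M'=M', OF inv expand(2,3)])
    show "fst (lab c) \<in> level le (snd (lab c))" using P2 expand by blast
    show "ikm_expand step le c N lab M = (N', lab', M')" using expand by simp
    show "good lab c \<or> (\<exists>e b. c = e @ [b] \<and> snd (lab c) = Suc (snd (lab e)))" using \<open>good lab c\<close> by blast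
  qed (use ii in auto)
  show ?thesis using r expand by blast
next
  case (accelerate c c')
  have P3: "\<forall>d a. d @ [a] \<in> N \<longrightarrow> (\<exists>K. csucc step le a (fst (lab d)) = Some K \<and>
        (lab (d @ [a]) = (K, snd (lab d)) \<or> (d @ [a] \<in> M \<and> snd (lab (d @ [a])) = Suc (snd (lab d)))))"
    and P2: "\<forall>d\<in>N. fst (lab d) \<in> level le (snd (lab d))"
    using inv unfolding ikm_inv_def by blast+
  obtain w where w: "w \<noteq> []" "c = c' @ w" using accelerate(5) unfolding proper_ancestor_def by blast
  have wd: "drop (length c') c = w" using w by simp
  have c'N: "c' \<in> N" using inv_pa[OF inv accelerate(5) accelerate(2)] inv unfolding ikm_inv_def by blast
  have path: "wsucc step le w (fst (lab c')) = Some (fst (lab c))"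
    using inv_path[OF inv, of c' w] accelerate w by simp
  have Kc: "fst (lab c) \<in> level le (snd (lab c))" using P2 accelerate(2) by blast
  have Kc': "fst (lab c') \<in> Idl le" using P2 c'N level_ideal by blast
  obtain L where L: "wsucc step le w (fst (lab c)) = Some L" "fst (lab c) \<subset> L"
    using wsucc_mono[OF Kc' level_ideal[OF Kc] _ path] accelerate(6) by blast
  define A where "A = accel step le w (fst (lab c))"
  have Al: "A \<in> level le (Suc (snd (lab c)))" unfolding A_def using accel_level[OF Kc L] .
  define lab1 where "lab1 = lab(c := (A, Suc (snd (lab c))))"
  have i: "fst (lab1 c) \<in> level le (snd (lab1 c))" unfolding lab1_def using Al by simp
  have ii: "\<exists>K. csucc step le b (fst (lab e)) = Some K \<and>
               (lab1 c = (K, snd (lab e)) \<or> snd (lab1 c) = Suc (snd (lab e)))" if ce: "c = e @ [b]" for e b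
  proof -
    obtain K where K: "csucc step le b (fst (lab e)) = Some K" "lab c = (K, snd (lab e))"
      using P3 ce accelerate(2,3) by blast
    then show ?thesis unfolding lab1_def by simp
  qed
  obtain e b where eb: "c = e @ [b]" using w by (metis append_is_Nil_conv rev_exhaust)
  have e_ne: "e \<noteq> c" using eb by simp
  have iii: "\<exists>e b. c = e @ [b] \<and> snd (lab1 c) = Suc (snd (lab e))"
  proof -
    obtain K where K: "lab c = (K, snd (lab e))"
      using P3 eb accelerate(2,3) by blast
    then show ?thesis using eb unfolding lab1_def by auto
  qed
  have lab1o: "\<And>d. d \<noteq> c \<Longrightarrow> lab1 d = lab d" unfolding lab1_def by simp
  have ex: "ikm_expand step le c N lab1 M = (N', lab', M')" using accelerate(1) wd unfolding lab1_def A_def by simp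
  from expand_inv[OF inv accelerate(2,3) lab1o i ii _ ex] iii
  show ?thesis using accelerate(3) by blast
qed

end

lemma konig_step:
  fixes T :: "'a list set"
  assumes fin: "finite (UNIV :: 'a set)" and inf: "infinite {v. u @ v \<in> T}"
  shows "\<exists>a. infinite {v. (u @ [a]) @ v \<in> T}"
proof (rule ccontr)
  assume "\<not> ?thesis"
  then have fa: "\<And>a. finite {v. (u @ [a]) @ v \<in> T}" by blast
  have "{v. u @ v \<in> T} \<subseteq> insert [] (\<Union>a. (Cons a) ` {v. (u @ [a]) @ v \<in> T})"
  proof
    fix v assume "v \<in> {v. u @ v \<in> T}"
    then show "v \<in> insert [] (\<Union>a. (Cons a) ` {v. (u @ [a]) @ v \<in> T})"
      by (cases v) auto
  qed
  moreover have "finite (insert [] (\<Union>a. (Cons a) ` {v. (u @ [a]) @ v \<in> T}))"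
    using fin fa by auto
  ultimately show False using inf finite_subset by blast
qed

lemma konig:
  fixes T :: "'a list set"
  assumes fin: "finite (UNIV :: 'a set)" and inf: "infinite T" and pc: "\<And>u v. u @ v \<in> T \<Longrightarrow> u \<in> T"
  shows "\<exists>g a. g 0 = [] \<and> (\<forall>k. g k \<in> T \<and> g (Suc k) = g k @ [a k])"
proof -
  define nxt where "nxt u = (SOME a. infinite {v. (u @ [a]) @ v \<in> T})" for u
  define g where "g k = rec_nat [] (\<lambda>k u. u @ [nxt u]) k" for k
  have g0: "g 0 = []" and gS: "g (Suc k) = g k @ [nxt (g k)]" for k unfolding g_def by simp_all
  have ginf: "infinite {v. g k @ v \<in> T}" for k
  proof (induction k)
    case 0 then show ?case using inf g0 by simp
  next
    case (Suc k)
    have ex: "\<exists>a. infinite {v. (g k @ [a]) @ v \<in> T}" by (rule konig_step[OF fin Suc.IH])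
    have "infinite {v. (g k @ [nxt (g k)]) @ v \<in> T}"
      unfolding nxt_def by (rule someI_ex[OF ex])
    then show ?case using gS by simp
  qed
  have gT: "g k \<in> T" for k
  proof -
    obtain v where "g k @ v \<in> T" using ginf[of k] not_finite_existsD by blast
    then show ?thesis using pc by blast
  qed
  show ?thesis
    by (rule exI[of _ g], rule exI[of _ "\<lambda>k. nxt (g k)"]) (use g0 gS gT in auto)
qed

context vwsts
begin

lemma terminates:
  assumes I0: "I0 \<in> Idl le"
  shows "ikm_terminates step le I0"
  unfolding ikm_terminates_def
proof (rule notI, elim exE conjE)
  fix f :: "nat \<Rightarrow> ('a, 'x) ikm_state"
  assume f0: "f 0 = ikm_init I0" and fs: "\<forall>i. ikm_step step le (f i) (f (Suc i))"
  define Nf where "Nf i = fst (f i)" for i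
  define Lf where "Lf i = fst (snd (f i))" for i
  define Mf where "Mf i = snd (snd (f i))" for i
  have fi: "f i = (Nf i, Lf i, Mf i)" for i unfolding Nf_def Lf_def Mf_def by simp
  have inv: "ikm_inv (Nf i) (Lf i) (Mf i)" for i
  proof (induction i)
    case 0 then show ?case using f0 init_inv[OF I0] fi[of 0] unfolding ikm_init_def by simp
  next
    case (Suc i)
    have "ikm_step step le (Nf i, Lf i, Mf i) (Nf (Suc i), Lf (Suc i), Mf (Suc i))" using fs fi by metis
    then show ?case using step_inv Suc.IH by blast
  qed
  have stp: "\<exists>c. c \<notin> Mf i \<and> Mf (Suc i) = insert c (Mf i)" and lst: "\<forall>d\<in>Mf i. Lf (Suc i) d = Lf i d" for i
  proof -
    have "ikm_step step le (Nf i, Lf i, Mf i) (Nf (Suc i), Lf (Suc i), Mf (Suc i))" using fs fi by metis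
    then show "\<exists>c. c \<notin> Mf i \<and> Mf (Suc i) = insert c (Mf i)" "\<forall>d\<in>Mf i. Lf (Suc i) d = Lf i d"
      using step_inv inv by blast+
  qed
  have Mmono: "i \<le> j \<Longrightarrow> Mf i \<subseteq> Mf j" for i j
    by (rule lift_Suc_mono_le[of Mf]) (use stp in auto)
  have Lstab: "d \<in> Mf i \<Longrightarrow> i \<le> j \<Longrightarrow> Lf j d = Lf i d" for d i j
  proof -
    assume d: "d \<in> Mf i"
    have "i \<le> j \<longrightarrow> Lf j d = Lf i d"
    proof (induction j)
      case 0 then show ?case by simp
    next
      case (Suc j)
      show ?case
      proof
        assume ij: "i \<le> Suc j"
        show "Lf (Suc j) d = Lf i d"
        proof (cases "i = Suc j")
          case True then show ?thesis by simp
        next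
          case False
          then have "i \<le> j" using ij by simp
          then have "d \<in> Mf j" using Mmono d by blast
          then show ?thesis using lst Suc.IH \<open>i \<le> j\<close> by simp
        qed
      qed
    qed
    then show "i \<le> j \<Longrightarrow> Lf j d = Lf i d" by blast
  qed
  have M0: "Mf 0 = {}" using f0 fi[of 0] unfolding ikm_init_def by simp
  have card: "finite (Mf i) \<and> card (Mf i) = i" for i
  proof (induction i)
    case 0 then show ?case using M0 by simp
  next
    case (Suc i)
    obtain c where "c \<notin> Mf i" "Mf (Suc i) = insert c (Mf i)" using stp by blast
    then show ?case using Suc.IH by simp
  qed
  define Ms where "Ms = (\<Union>i. Mf i)"
  have Msinf: "infinite Ms"
  proof
    assume fin: "finite Ms"
    have "Mf (Suc (card Ms)) \<subseteq> Ms" unfolding Ms_def by blast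
    then have "card (Mf (Suc (card Ms))) \<le> card Ms" using fin card_mono by blast
    then show False using card by simp
  qed
  have MN: "Mf i \<subseteq> Nf i" for i using inv[of i] unfolding ikm_inv_def by blast
  have Mpc: "u @ v \<in> Mf i \<Longrightarrow> u \<in> Mf i" for u v i
    using inv_anc[OF inv[of i], of u v] MN by (cases "v = []") auto
  have Mspc: "u @ v \<in> Ms \<Longrightarrow> u \<in> Ms" for u v using Mpc unfolding Ms_def by blast
  have "\<exists>g a. g 0 = [] \<and> (\<forall>k. g k \<in> Ms \<and> g (Suc k) = g k @ [a k])"
    by (rule konig[OF fin_alpha Msinf]) (rule Mspc)
  then obtain b a where b0: "b 0 = []" and ba: "\<forall>k. b k \<in> Ms \<and> b (Suc k) = b k @ [a k]"
    by (elim exE conjE)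
  have bT: "\<And>k. b k \<in> Ms" and bS: "\<And>k. b (Suc k) = b k @ [a k]" using ba by simp_all
  have bpref: "m \<le> k \<Longrightarrow> \<exists>v. b k = b m @ v \<and> (m < k \<longrightarrow> v \<noteq> [])" for m k
  proof (induction k arbitrary: m)
    case 0 then show ?case by simp
  next
    case (Suc k)
    show ?case
    proof (cases "m = Suc k")
      case True then show ?thesis by simp
    next
      case False
      then have "m \<le> k" using Suc.prems by simp
      then obtain v where "b k = b m @ v" using Suc.IH by blast
      then show ?thesis using bS by auto
    qed
  qed
  define Lab where "Lab d = Lf (SOME i. d \<in> Mf i) d" for d
  have LabI: "d \<in> Mf i \<Longrightarrow> Lf i d = Lab d" for d i
  proof -
    assume d: "d \<in> Mf i"
    define i0 where "i0 = (SOME i. d \<in> Mf i)"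
    have d0: "d \<in> Mf i0" unfolding i0_def using d by (rule someI)
    have "Lf (max i i0) d = Lf i d" by (rule Lstab[OF d]) simp
    moreover have "Lf (max i i0) d = Lf i0 d" by (rule Lstab[OF d0]) simp
    ultimately have "Lf i d = Lf i0 d" by simp
    then show ?thesis unfolding Lab_def i0_def[symmetric] by simp
  qed
  define n where "n k = snd (Lab (b k))" for k
  define J where "J k = fst (Lab (b k))" for k
  have tm: "\<exists>i. b (Suc k) \<in> Mf i" for k using bT[of "Suc k"] unfolding Ms_def by blast
  have pref_in: "b (Suc k) \<in> Mf i \<Longrightarrow> m \<le> Suc k \<Longrightarrow> b m \<in> Mf i" for k i m
  proof -
    assume h: "b (Suc k) \<in> Mf i" "m \<le> Suc k"
    obtain v where "b (Suc k) = b m @ v" using bpref[OF h(2)] by blast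
    then show "b m \<in> Mf i" using h(1) Mpc by metis
  qed
  have F1: "J k \<in> level le (n k)" for k
  proof -
    obtain i where "b (Suc k) \<in> Mf i" using tm by blast
    then have "b k \<in> Mf i" using pref_in by simp
    then show ?thesis using inv[of i] MN[of i] LabI unfolding ikm_inv_def J_def n_def by fastforce
  qed
  have F2: "n (Suc k) = n k \<or> n (Suc k) = Suc (n k)" for k
  proof -
    obtain i where i: "b (Suc k) \<in> Mf i" using tm by blast
    then have bk: "b k \<in> Mf i" using pref_in by simp
    have "b k @ [a k] \<in> Nf i" using i MN bS by auto
    then obtain K where "Lf i (b k @ [a k]) = (K, snd (Lf i (b k))) \<or> snd (Lf i (b k @ [a k])) = Suc (snd (Lf i (b k)))"
      using inv[of i] unfolding ikm_inv_def by blast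
    then show ?thesis using LabI[OF i] LabI[OF bk] bS unfolding n_def by auto
  qed
  have F3: "(\<forall>m<k. J m \<noteq> J k \<and> \<not> (J m \<subset> J k \<and> n m = n k)) \<or> (\<exists>k'. k = Suc k' \<and> n k = Suc (n k'))" for k
  proof -
    obtain i where i: "b (Suc k) \<in> Mf i" using tm by blast
    have bm: "m \<le> k \<Longrightarrow> Lf i (b m) = Lab (b m)" for m using pref_in[OF i, of m] LabI by simp
    have "b k @ [a k] \<in> Nf i" using i MN bS by auto
    then have "good (Lf i) (b k) \<or> (\<exists>e bb. b k = e @ [bb] \<and> snd (Lf i (b k)) = Suc (snd (Lf i e)))"
      using inv[of i] unfolding ikm_inv_def by blast
    then show ?thesis
    proof
      assume g: "good (Lf i) (b k)"
      have "J m \<noteq> J k \<and> \<not> (J m \<subset> J k \<and> n m = n k)" if mk: "m < k" for m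
      proof -
        obtain v where v: "b k = b m @ v" "v \<noteq> []" using bpref[of m k] mk by auto
        then have pa: "proper_ancestor (b m) (b k)" unfolding proper_ancestor_def by blast
        have "\<not> (fst (Lf i (b m)) = fst (Lf i (b k)))" "\<not> (fst (Lf i (b m)) \<subset> fst (Lf i (b k)) \<and> snd (Lf i (b m)) = snd (Lf i (b k)))"
          using g pa unfolding good_def by blast+
        then show ?thesis using bm[of m] bm[of k] mk unfolding J_def n_def by simp
      qed
      then show ?thesis by blast
    next
      assume "\<exists>e bb. b k = e @ [bb] \<and> snd (Lf i (b k)) = Suc (snd (Lf i e))"
      then obtain e bb where e: "b k = e @ [bb]" "snd (Lf i (b k)) = Suc (snd (Lf i e))" by blast
      then obtain k' where k': "k = Suc k'" using b0 by (cases k) auto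
      then have "e = b k'" using e(1) bS by simp
      then show ?thesis using e(2) bm[of k'] bm[of k] k' unfolding n_def by auto
    qed
  qed
  obtain Nb where Nb: "\<And>m K. K \<in> level le m \<Longrightarrow> m < Nb" using level_bound by blast
  have nb: "n k < Nb" for k using Nb F1 by blast
  have nS: "n k \<le> n (Suc k)" for k using F2[of k] by linarith
  have nmono: "i \<le> j \<Longrightarrow> n i \<le> n j" for i j
    using lift_Suc_mono_le[of n, OF nS] by blast
  have "range n \<subseteq> {..<Nb}" using nb by auto
  then have finr: "finite (range n)" using finite_subset by blast
  define mx where "mx = Max (range n)"
  obtain k0 where k0: "n k0 = mx" using Max_in[OF finr] unfolding mx_def by auto
  have nconst: "k0 \<le> k \<Longrightarrow> n k = mx" for k
    using nmono[of k0 k] Max_ge[OF finr, of "n k"] k0 unfolding mx_def by auto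
  have JI: "J k \<in> Idl le" for k using F1 level_ideal by blast
  obtain i j where ij: "i < j" "J (Suc k0 + i) \<subseteq> J (Suc k0 + j)"
    using wqoI[of "\<lambda>j. J (Suc k0 + j)"] JI by blast
  define K where "K = Suc k0 + j"
  define m' where "m' = Suc k0 + i"
  have mK: "m' < K" using ij unfolding K_def m'_def by simp
  have nK: "n K = mx" "n m' = mx" using nconst unfolding K_def m'_def by auto
  show False
  using F3[of K]
  proof
    assume "\<forall>m<K. J m \<noteq> J K \<and> \<not> (J m \<subset> J K \<and> n m = n K)"
    then have "J m' \<noteq> J K" "\<not> (J m' \<subset> J K \<and> n m' = n K)" using mK by blast+
    then show False using ij(2) nK unfolding K_def m'_def by auto
  next
    assume "\<exists>k'. K = Suc k' \<and> n K = Suc (n k')"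
    then obtain k' where "K = Suc k'" "n K = Suc (n k')" by blast
    moreover have "n k' = mx" using nconst calculation(1) unfolding K_def by simp
    ultimately show False using nK by simp
  qed
qed

end

theorem theorem8:
  fixes step :: "'a \<Rightarrow> 'x \<Rightarrow> 'x \<Rightarrow> bool" and le :: "'x \<Rightarrow> 'x \<Rightarrow> bool" and I0 :: "'x set"
  assumes "very_wsts step le"
    and "I0 \<in> Idl le"
  shows "ikm_terminates step le I0"
proof -
  interpret vwsts step le by unfold_locales (rule assms(1))
  show ?thesis by (rule terminates[OF assms(2)])
qed

end
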